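(* Let $n\ge 3$ and $x\in S_n$ avoid $123$. Then there exists $1\le i\le n-2$ with $|\mathrm{Act}_i(x;123)|=|\mathrm{Act}_{i+1}(x;123)|\le|\mathrm{Act}_{i+2}(x;123)|$ if and only if $x$ contains the bivincular pattern $132^{\star}$.
   Context: For $w=w_1\cdots w_{m}\in S_{m}$ and $1\le i\le m+1$, let $w^i$ be the permutation obtained by inserting $m+1$ immediately before $w_i$ (at the end if $i=m+1$). For a pattern $y$, site $i$ of $w$ is active with respect to $y$ if $w^i$ avoids $y$ (has no subsequence order-isomorphic to $y$). For $x\in S_n$ and $1\le k\le n$, let $\mathrm{small}_k(x)$ be the subsequence of $x$ formed by the entries $1,\dots,k$ (a permutation in $S_k$). For $1\le j\le n$, $\mathrm{Act}_j(x;y)$ is the set of active sites of $\mathrm{small}_{n+1-j}(x)$ with respect to $y$. (The word $|\mathrm{Act}_1(x;y)|\cdots|\mathrm{Act}_{n-1}(x;y)|$ is West's signature of $x$.) An occurrence of the bivincular pattern $132^{\star}$ in $x$ is a pair of indices $a<b<n$ with $x_a<x_{b+1}$ and $x_b=x_{b+1}+1$. *)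

theory Defs
  imports "HOL-Library.Sublist"
begin

definition is_perm :: "nat \<Rightarrow> nat list \<Rightarrow> bool" where
  "is_perm n x \<longleftrightarrow> length x = n \<and> distinct x \<and> set x = {1..n}"

definition order_iso :: "nat list \<Rightarrow> nat list \<Rightarrow> bool" where
  "order_iso a b \<longleftrightarrow> length a = length b \<and>
     (\<forall>i<length a. \<forall>j<length a. (a ! i < a ! j) \<longleftrightarrow> (b ! i < b ! j))"

definition contains :: "nat list \<Rightarrow> nat list \<Rightarrow> bool" where
  "contains x y \<longleftrightarrow> (\<exists>s. subseq s x \<and> order_iso s y)"

definition avoids :: "nat list \<Rightarrow> nat list \<Rightarrow> bool" where
  "avoids x y \<longleftrightarrow> \<not> contains x y"

text \<open>w^i: insert m+1 (m = length w) immediately before w_i (1-indexed); at the end if i = m+1.\<close>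
definition ins_max :: "nat list \<Rightarrow> nat \<Rightarrow> nat list" where
  "ins_max w i = take (i - 1) w @ [length w + 1] @ drop (i - 1) w"

definition active_sites :: "nat list \<Rightarrow> nat list \<Rightarrow> nat set" where
  "active_sites w y = {i \<in> {1..length w + 1}. avoids (ins_max w i) y}"

definition small :: "nat \<Rightarrow> nat list \<Rightarrow> nat list" where
  "small k x = filter (\<lambda>v. v \<le> k) x"

definition Act :: "nat \<Rightarrow> nat list \<Rightarrow> nat list \<Rightarrow> nat set" where
  "Act j x y = active_sites (small (length x + 1 - j) x) y"

text \<open>Occurrence of the bivincular pattern 132*: 1-indexed a < b < n with
  x_a < x_{b+1} and x_b = x_{b+1} + 1 (here written with 0-based list indices).\<close>
definition contains_132star :: "nat list \<Rightarrow> bool" where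
  "contains_132star x \<longleftrightarrow> (\<exists>a b. a < b \<and> b + 1 < length x \<and>
      x ! a < x ! (b + 1) \<and> x ! b = x ! (b + 1) + 1)"

end

theory Submission
  imports Defs
begin

lemma oi123: "order_iso s [1,2,3] \<Longrightarrow> \<exists>p q r. s = [p,q,r] \<and> p<q \<and> q<r"
proof -
  assume h: "order_iso s [1,2,3]"
  then have l: "length s = 3" by (simp add: order_iso_def)
  have s: "s = [s!0, s!1, s!2]"
    by (rule nth_equalityI) (auto simp: l less_Suc_eq numeral_3_eq_3 numeral_2_eq_2 nth_Cons')
  have h2: "\<forall>i<length s. \<forall>j<length s. (s!i < s!j) = ([1,2,3::nat]!i < [1,2,3]!j)"
    using h unfolding order_iso_def by blast
  have "s!0 < s!1" using h2[rule_format, of 0 1] l by simp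
  moreover have "s!1 < s!2" using h2[rule_format, of 1 2] l by simp
  ultimately show ?thesis using s by blast
qed
lemma oi123_rev: "p<q \<Longrightarrow> q<r \<Longrightarrow> order_iso [p,q,r] [1,2,3]"
  unfolding order_iso_def
  by (auto simp: less_Suc_eq numeral_3_eq_3 nth_Cons')

lemma contains123_iff: "contains w [1,2,3] \<longleftrightarrow> (\<exists>p q r. subseq [p,q,r] w \<and> p<q \<and> q<r)"
  unfolding contains_def using oi123 oi123_rev by blast

lemma subseq_nth_cons: "i < length w \<Longrightarrow> subseq xs (drop (Suc i) w) \<Longrightarrow> subseq (w!i # xs) w"
proof -
  assume i: "i < length w" and s: "subseq xs (drop (Suc i) w)"
  have "w = take i w @ w!i # drop (Suc i) w" using i by (simp add: id_take_nth_drop)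
  moreover have "subseq (w!i # xs) (take i w @ w!i # drop (Suc i) w)"
    using s by (intro list_emb_append2) simp
  ultimately show ?thesis by metis
qed

lemma subseq_nth3: "i<j \<Longrightarrow> j<l \<Longrightarrow> l < length w \<Longrightarrow> subseq [w!i,w!j,w!l] w"
proof -
  assume a: "i<j" "j<l" "l < length w"
  have e1: "drop (Suc j) w ! (l - Suc j) = w!l" "l - Suc j < length (drop (Suc j) w)" using a by simp_all
  have "subseq [w!l] (drop (Suc j) w)"
    unfolding subseq_singleton_left using nth_mem[OF e1(2)] e1(1) by simp
  then have "subseq [w!j, w!l] (drop (Suc i) w)"
  proof -
    assume h: "subseq [w!l] (drop (Suc j) w)"
    have "drop (Suc i) w ! (j - Suc i) = w ! j" using a by simp
    moreover have "drop (Suc (j - Suc i)) (drop (Suc i) w) = drop (Suc j) w" using a by simp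
    ultimately show ?thesis using subseq_nth_cons[of "j - Suc i" "drop (Suc i) w" "[w!l]"] a h by simp
  qed
  then show ?thesis using subseq_nth_cons[of i w "[w!j, w!l]"] a by simp
qed

lemma subseq_set: "subseq xs ys \<Longrightarrow> set xs \<subseteq> set ys"
  by (induction rule: list_emb.induct) auto

lemma sorted_wrt_subseq: "subseq xs ys \<Longrightarrow> sorted_wrt P ys \<Longrightarrow> sorted_wrt P xs"
proof (induction rule: list_emb.induct)
  case (list_emb_Cons2 x y xs ys)
  then show ?case using subseq_set[of xs ys] by auto
qed auto

fun dp :: "nat list \<Rightarrow> nat" where
  "dp [] = 0"
| "dp [a] = 1"
| "dp (a#b#xs) = (if b < a then Suc (dp (b#xs)) else 1)"

lemma dp_le: "dp w \<le> length w"
  by (induction w rule: dp.induct) auto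

lemma dp_take: "j \<le> length w \<Longrightarrow> sorted_wrt (>) (take j w) \<longleftrightarrow> j \<le> dp w"
proof (induction w arbitrary: j rule: dp.induct)
  case 1 then show ?case by simp
next
  case (2 a) then show ?case by (cases j) auto
next
  case (3 a b xs)
  show ?case
  proof (cases j)
    case 0 then show ?thesis by simp
  next
    case (Suc j')
    show ?thesis
    proof (cases j')
      case 0 then show ?thesis using Suc by simp
    next
      case (Suc j'')
      show ?thesis
      proof (cases "b < a")
        case False
        then show ?thesis using Suc \<open>j = Suc j'\<close> by simp
      next
        case True
      have ih: "sorted_wrt (>) (take j' (b#xs)) \<longleftrightarrow> j' \<le> dp (b#xs)"
        using "3.IH" True \<open>j = Suc j'\<close> "3.prems" by auto
      have e: "take j (a#b#xs) = a # take j' (b#xs)" using \<open>j = Suc j'\<close> by simp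
      have "sorted_wrt (>) (a # take j' (b#xs)) \<longleftrightarrow> b < a \<and> sorted_wrt (>) (take j' (b#xs))"
      proof
        assume h: "sorted_wrt (>) (a # take j' (b#xs))"
        then show "b < a \<and> sorted_wrt (>) (take j' (b#xs))" using Suc by simp
      next
        assume h: "b < a \<and> sorted_wrt (>) (take j' (b#xs))"
        then have "\<forall>y\<in>set (take j' (b#xs)). y < a"
          using Suc by (auto dest: in_set_takeD)
        with h show "sorted_wrt (>) (a # take j' (b#xs))" by simp
      qed
      then show ?thesis using e ih Suc True \<open>j = Suc j'\<close> by auto
      qed
    qed
  qed
qed


lemma dp_D2: "sorted_wrt (>) P \<Longrightarrow> length P \<le> dp (P @ Q)"
  using dp_take[of "length P" "P @ Q"] by simp

lemma dp_D1:
  assumes "P \<noteq> []" "sorted_wrt (>) P" "last P < c"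
  shows "dp (P @ c # Q) = length P"
proof -
  have "length P \<le> dp (P @ c # Q)" using dp_D2 assms(2) by blast
  moreover have "\<not> sorted_wrt (>) (take (Suc (length P)) (P @ c # Q))"
  proof
    assume "sorted_wrt (>) (take (Suc (length P)) (P @ c # Q))"
    then have "sorted_wrt (>) (P @ [c])" by simp
    then have "c < last P" using assms(1) by (simp add: sorted_wrt_append)
    then show False using assms(3) by simp
  qed
  then have "\<not> Suc (length P) \<le> dp (P @ c # Q)"
    using dp_take[of "Suc (length P)" "P @ c # Q"] by simp
  ultimately show ?thesis by simp
qed

lemma dp_D3: "\<forall>v\<in>set B. v < c \<Longrightarrow> dp (c # B) = Suc (dp B)"
  by (cases B) auto

lemma sorted_from_avoid:
  assumes "avoids (C @ c # E) [1,2,3]" "distinct C" "\<forall>v\<in>set C. v < c"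
  shows "sorted_wrt (>) C"
proof (rule ccontr)
  assume "\<not> sorted_wrt (>) C"
  then obtain i j where ij: "i < j" "j < length C" "\<not> C!j < C!i"
    unfolding sorted_wrt_iff_nth_less by blast
  then have "C!i \<noteq> C!j" using assms(2) by (simp add: nth_eq_iff_index_eq)
  with ij have lt: "C!i < C!j" by simp
  let ?L = "C @ c # E"
  have "subseq [?L!i, ?L!j, ?L!(length C)] ?L"
    by (rule subseq_nth3) (use ij in auto)
  moreover have "?L!i = C!i" "?L!j = C!j" "?L!(length C) = c" using ij by (auto simp: nth_append)
  moreover have "C!j < c" using assms(3) ij by simp
  ultimately have "contains ?L [1,2,3]" unfolding contains123_iff using lt by metis
  then show False using assms(1) unfolding avoids_def by simp
qed

lemma ins_avoid:
  assumes T: "sorted_wrt (>) T" and av: "avoids (T@D) [1,2,3]" and M: "\<forall>v\<in>set (T@D). v < M"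
  shows "avoids (T @ M # D) [1,2,3]"
proof -
  { fix p q r assume s: "subseq [p,q,r] (T @ M # D)" and pq: "p<q" "q<r"
    from s obtain xs1 xs2 where x: "[p,q,r] = xs1 @ xs2" "subseq xs1 T" "subseq xs2 (M # D)"
      by (rule subseq_appendE)
    have False
    proof (cases "subseq xs2 D")
      case True
      then have "subseq [p,q,r] (T @ D)" using x by (simp add: list_emb_append_mono)
      then show False using av pq unfolding avoids_def contains123_iff by blast
    next
      case False
      then obtain ys where ys: "xs2 = M # ys" "subseq ys D" using x(3)
        by (cases xs2) (auto split: if_splits)
      have s1: "set xs1 \<subseteq> set T" using x(2) by (rule subseq_set)
      have s2: "set ys \<subseteq> set D" using ys(2) by (rule subseq_set)
      have e: "[p,q,r] = xs1 @ M # ys" using x ys by simp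
      show False
      proof (cases xs1)
        case Nil
        then have "p = M" "q \<in> set ys" using e by auto
        moreover then have "q < M" using s2 M by auto
        ultimately show False using pq by simp
      next
        case (Cons y1 t1)
        show False
        proof (cases t1)
          case Nil
          then have "q = M" "r \<in> set ys" using e Cons by auto
          moreover then have "r < M" using s2 M by auto
          ultimately show False using pq by simp
        next
          case (Cons y2 t2)
          then have "t2 = []" "y1 = p" "y2 = q" using e \<open>xs1 = y1 # t1\<close>
            by (auto simp: Cons_eq_append_conv)
          then have "subseq [p,q] T" using x(2) \<open>xs1 = y1 # t1\<close> Cons by simp
          then have "sorted_wrt (>) [p,q]" using T sorted_wrt_subseq by blast
          then show False using pq by simp
        qed
      qed
    qed }
  then show ?thesis unfolding avoids_def contains123_iff by blast
qed

lemma act_char: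
  assumes d: "distinct w" and b: "\<forall>v\<in>set w. v \<le> length w" and av: "avoids w [1,2,3]"
  shows "active_sites w [1,2,3] = {1..dp w + 1}"
proof -
  have dl: "dp w \<le> length w" by (rule dp_le)
  have "i \<in> active_sites w [1,2,3] \<longleftrightarrow> i \<in> {1..dp w + 1}" for i
  proof (cases "1 \<le> i \<and> i \<le> length w + 1")
    case False then show ?thesis using dl unfolding active_sites_def by auto
  next
    case True
    define j where "j = i - 1"
    have ij: "i = j + 1" "j \<le> length w" using True j_def by auto
    have im: "ins_max w i = take j w @ (length w + 1) # drop j w"
      unfolding ins_max_def j_def by simp
    show ?thesis
    proof (cases "j \<le> dp w")
      case True
      then have "sorted_wrt (>) (take j w)" using dp_take ij by blast
      moreover have "avoids (take j w @ drop j w) [1,2,3]" using av by simp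
      moreover have "\<forall>v\<in>set (take j w @ drop j w). v < length w + 1" using b by auto
      ultimately have "avoids (ins_max w i) [1,2,3]" unfolding im by (rule ins_avoid)
      then show ?thesis unfolding active_sites_def using ij True by auto
    next
      case False
      then have "\<not> sorted_wrt (>) (take j w)" using dp_take ij by blast
      then obtain a c where ac: "a < c" "c < j" "\<not> w!c < w!a"
        unfolding sorted_wrt_iff_nth_less using ij by auto
      then have "w!a \<noteq> w!c" using d ij by (simp add: nth_eq_iff_index_eq)
      with ac have lt: "w!a < w!c" by simp
      let ?L = "take j w @ (length w + 1) # drop j w"
      have "subseq [?L!a, ?L!c, ?L!j] ?L"
        by (rule subseq_nth3) (use ac ij in auto)
      moreover have "?L!a = w!a" "?L!c = w!c" "?L!j = length w + 1" using ac ij by (auto simp: nth_append)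
      moreover have "w!c < length w + 1" using b ac ij by (simp add: le_imp_less_Suc)
      ultimately have "contains ?L [1,2,3]" unfolding contains123_iff using lt by metis
      then show ?thesis unfolding active_sites_def avoids_def im[symmetric] using False ij by auto
    qed
  qed
  then show ?thesis by blast
qed


lemma small_props:
  assumes "is_perm n x" "k \<le> n"
  shows "distinct (small k x)" "set (small k x) = {1..k}" "length (small k x) = k"
proof -
  show d: "distinct (small k x)" using assms(1) unfolding is_perm_def small_def by simp
  show s: "set (small k x) = {1..k}" using assms unfolding is_perm_def small_def by auto
  show "length (small k x) = k" using distinct_card[OF d] s by simp
qed

lemma small_avoid: "avoids x y \<Longrightarrow> avoids (small k x) y"
  unfolding avoids_def contains_def small_def
  using subseq_filter_left subseq_order.trans by blast

lemma card_Act: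
  assumes "is_perm n x" "avoids x [1,2,3]" "1 \<le> j"
  shows "card (Act j x [1,2,3]) = dp (small (n+1-j) x) + 1"
proof -
  have ln: "length x = n" using assms(1) by (simp add: is_perm_def)
  let ?w = "small (n+1-j) x"
  have "n+1-j \<le> n" using assms(3) by simp
  note sp = small_props[OF assms(1) this]
  have "active_sites ?w [1,2,3] = {1..dp ?w + 1}"
    by (rule act_char) (use sp small_avoid[OF assms(2)] in auto)
  then show ?thesis unfolding Act_def ln by simp
qed

lemma small_small: "k' \<le> k \<Longrightarrow> small k' (small k x) = small k' x"
  unfolding small_def by (simp add: filter_filter) (metis (lifting) le_trans)


lemma small_Cons_le: "v \<le> k \<Longrightarrow> small k (v # X) = v # small k X"
  unfolding small_def by simp
lemma small_Cons_gt: "\<not> v \<le> k \<Longrightarrow> small k (v # X) = small k X"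
  unfolding small_def by simp
lemma small_append: "small k (X @ Y) = small k X @ small k Y"
  unfolding small_def by simp
lemma small_notin: "k \<notin> set X \<Longrightarrow> small k X = small (k-1) X"
  unfolding small_def
proof (rule filter_cong[OF refl])
  fix v assume "k \<notin> set X" "v \<in> set X"
  then have "v \<noteq> k" by blast
  then show "(v \<le> k) = (v \<le> k - 1)" by linarith
qed

lemma dir1:
  assumes p: "is_perm n x" and av: "avoids x [1,2,3]" and k: "3 \<le> k" "k \<le> n"
    and c1: "dp (small k x) = dp (small (k-1) x)" and c2: "dp (small (k-1) x) \<le> dp (small (k-2) x)"
  shows "contains_132star x"
proof -
  have dx: "distinct x" and sx: "set x = {1..n}" using p by (auto simp: is_perm_def)
  have "k \<in> set x" using sx k by auto
  then obtain X1 X2 where x: "x = X1 @ k # X2" by (meson split_list)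
  have kX: "k \<notin> set X1" "k \<notin> set X2" using dx x by auto
  define C where "C = small (k-1) X1"
  define E where "E = small (k-1) X2"
  have sk: "small k x = C @ k # E" unfolding x C_def E_def small_append
    using small_notin[OF kX(1)] small_notin[OF kX(2)] by (simp add: small_def)
  have sk1: "small (k-1) x = C @ E" unfolding x C_def E_def small_append using k
    by (simp add: small_def)
  have "k-1 \<le> n" using k by simp
  note sp1 = small_props[OF p this]
  have "k-1 \<in> set (small (k-1) x)" using sp1 k by auto
  then obtain A B where sa: "small (k-1) x = A @ (k-1) # B" by (meson split_list)
  have dAB: "distinct (A @ (k-1) # B)" using sp1 sa by metis
  have setAB: "set (A @ (k-1) # B) = {1..k-1}" using sp1 sa by metis
  have Alt: "\<forall>v\<in>set A. v < k-1" and Blt: "\<forall>v\<in>set B. v < k-1"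
  proof -
    show "\<forall>v\<in>set A. v < k-1"
    proof
      fix v assume "v \<in> set A"
      then have "v \<le> k-1" "v \<noteq> k-1" using setAB dAB by auto
      then show "v < k-1" by simp
    qed
    show "\<forall>v\<in>set B. v < k-1"
    proof
      fix v assume "v \<in> set B"
      then have "v \<le> k-1" "v \<noteq> k-1" using setAB dAB by auto
      then show "v < k-1" by simp
    qed
  qed
  have sk2: "small (k-2) x = A @ B"
  proof -
    have "small (k-2) x = small (k-2) (small (k-1) x)" using small_small[of "k-2" "k-1" x] by simp
    also have "\<dots> = small (k-2) A @ small (k-2) ((k-1) # B)" unfolding sa small_append ..
    also have "\<dots> = A @ B"
    proof -
      have "\<forall>v\<in>set A. v \<le> k-2" "\<forall>v\<in>set B. v \<le> k-2" using Alt Blt by auto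
      then show ?thesis using k unfolding small_def by (simp add: filter_id_conv)
    qed
    finally show ?thesis .
  qed
  have An: "A \<noteq> []"
  proof
    assume "A = []"
    then have "dp (small (k-1) x) = Suc (dp B)" using sa dp_D3[OF Blt] by simp
    moreover have "dp (small (k-2) x) = dp B" using sk2 \<open>A = []\<close> by simp
    ultimately show False using c2 by simp
  qed
  have avk1: "avoids (A @ (k-1) # B) [1,2,3]" using small_avoid[OF av, of "k-1"] sa by simp
  have As: "sorted_wrt (>) A" using sorted_from_avoid[OF avk1] dAB Alt by simp
  have dA: "dp (small (k-1) x) = length A"
    unfolding sa using dp_D1[OF An As] Alt An last_in_set by blast
  have dCE: "distinct (C @ E)" using sp1 sk1 by metis
  have setCE: "set (C @ E) = {1..k-1}" using sp1 sk1 by metis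
  have "\<forall>v\<in>set (C @ E). v < k" unfolding setCE using k by auto
  then have Elt: "\<forall>v\<in>set E. v < k" and Clt: "\<forall>v\<in>set C. v < k" by auto
  have Cn: "C \<noteq> []"
  proof
    assume "C = []"
    then have "dp (small k x) = Suc (dp (small (k-1) x))" using sk sk1 dp_D3[OF Elt] by simp
    then show False using c1 by simp
  qed
  have avk: "avoids (C @ k # E) [1,2,3]" using small_avoid[OF av, of k] sk by simp
  have Cs: "sorted_wrt (>) C" using sorted_from_avoid[OF avk] dCE Clt by simp
  have dC: "dp (small k x) = length C"
    unfolding sk using dp_D1[OF Cn Cs] Clt Cn last_in_set by blast
  have "length C = length A" using dA dC c1 by simp
  then have CA: "C = A" and EB: "E = (k-1) # B" using sk1 sa append_eq_append_conv by auto
  obtain a where a: "a \<in> set A" using An by fastforce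
  have aX1: "a \<in> set X1" using a CA unfolding C_def small_def by auto
  have alt: "a < k-1" using a Alt by simp
  obtain X2' where X2: "X2 = (k-1) # X2'"
  proof (cases X2)
    case Nil then show ?thesis using EB unfolding E_def small_def by simp
  next
    case (Cons m X2')
    show ?thesis
    proof (cases "m \<le> k-1")
      case True
      then have "m = k-1" using EB Cons unfolding E_def small_def by simp
      then show ?thesis using Cons that by simp
    next
      case False
      then have mk: "k < m" using kX(2) Cons by auto
      have "subseq [a] X1" using aX1 by (simp add: subseq_singleton_left)
      moreover have "subseq [k,m] (k # m # X2')" by simp
      ultimately have "subseq ([a] @ [k,m]) (X1 @ k # m # X2')" by (rule list_emb_append_mono)
      then have "contains x [1,2,3]" unfolding contains123_iff x Cons using alt mk k
        by (intro exI[of _ a] exI[of _ k] exI[of _ m]) simp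
      then show ?thesis using av unfolding avoids_def by simp
    qed
  qed
  obtain ia where ia: "ia < length X1" "X1 ! ia = a" using aX1 by (meson in_set_conv_nth)
  have "x ! ia = a" "x ! length X1 = k" "x ! (length X1 + 1) = k - 1" "length X1 + 1 < length x"
    using ia unfolding x X2 by (auto simp: nth_append)
  then show ?thesis unfolding contains_132star_def using ia alt k
    by (intro exI[of _ ia] exI[of _ "length X1"]) simp
qed


lemma dir2:
  assumes p: "is_perm n x" and av: "avoids x [1,2,3]" and c: "contains_132star x"
  shows "\<exists>k. 3 \<le> k \<and> k \<le> n \<and> dp (small k x) = dp (small (k-1) x) \<and>
            dp (small (k-1) x) \<le> dp (small (k-2) x)"
proof -
  have dx: "distinct x" and sx: "set x = {1..n}" and lx: "length x = n" using p by (auto simp: is_perm_def)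
  obtain a b where ab: "a < b" "b + 1 < length x" "x ! a < x ! (b + 1)" "x ! b = x ! (b + 1) + 1"
    using c unfolding contains_132star_def by blast
  define v where "v = x ! (b+1)"
  define X1 where "X1 = take b x"
  define X2 where "X2 = drop (b+2) x"
  have x: "x = X1 @ (v+1) # v # X2"
  proof -
    have h1: "x = take b x @ x!b # drop (Suc b) x" by (rule id_take_nth_drop) (use ab(2) in simp)
    have h2: "drop (Suc b) x = x!(Suc b) # drop (Suc (Suc b)) x" using ab(2) by (simp add: Cons_nth_drop_Suc)
    have h3: "take b x @ x!b # x!(Suc b) # drop (Suc (Suc b)) x = x" using h1 h2 by metis
    have "X1 @ (v+1) # v # X2 = take b x @ x!b # x!(Suc b) # drop (Suc (Suc b)) x"
      unfolding X1_def X2_def v_def using ab(4) by simp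
    then show ?thesis using h3 by simp
  qed
  have "x ! a \<in> set x" using ab by simp
  then have xa1: "1 \<le> x ! a" using sx by auto
  have v2: "2 \<le> v" using xa1 ab unfolding v_def by simp
  have "v + 1 \<in> set x" using x by simp
  then have vn: "v + 1 \<le> n" using sx by auto
  have dX: "distinct (X1 @ (v+1) # v # X2)" using dx x by metis
  then have nX: "v+1 \<notin> set X1" "v \<notin> set X1" "v+1 \<notin> set X2" "v \<notin> set X2" by auto
  define P where "P = small (v-1) X1"
  define Q where "Q = small (v-1) X2"
  have e1: "small (v+1) X1 = P" "small v X1 = P" "small (v+1) X2 = Q" "small v X2 = Q"
    unfolding P_def Q_def using small_notin[OF nX(1)] small_notin[OF nX(2)]
      small_notin[OF nX(3)] small_notin[OF nX(4)] by simp_all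
  have s0: "small (v+1) x = P @ (v+1) # v # Q"
    unfolding x small_append using e1 by (simp add: small_def)
  have s1: "small v x = P @ v # Q"
    unfolding x small_append using e1 by (simp add: small_def)
  have s2: "small (v-1) x = P @ Q"
    unfolding x small_append P_def Q_def using v2 by (simp add: small_def)
  have aX: "x ! a \<in> set X1" using ab unfolding X1_def by (simp add: in_set_conv_nth) (rule exI[of _ a], simp)
  have "x ! a \<in> set P" using aX ab unfolding P_def small_def v_def by simp
  then have Pn: "P \<noteq> []" by auto
  have Plt: "\<forall>u\<in>set P. u < v" using v2 unfolding P_def small_def by auto
  have dP: "distinct P" using dX unfolding P_def small_def by simp
  have avs: "avoids (P @ v # Q) [1,2,3]" using small_avoid[OF av, of v] s1 by simp
  have Ps: "sorted_wrt (>) P" using sorted_from_avoid[OF avs dP Plt] .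
  have lP: "last P < v" using Plt Pn last_in_set by blast
  have d0: "dp (small (v+1) x) = length P" unfolding s0 using dp_D1[OF Pn Ps] lP by simp
  have d1: "dp (small v x) = length P" unfolding s1 using dp_D1[OF Pn Ps] lP by simp
  have d2: "length P \<le> dp (small (v-1) x)" unfolding s2 using dp_D2[OF Ps] .
  show ?thesis
    by (rule exI[of _ "v+1"]) (use v2 vn d0 d1 d2 in \<open>auto simp: numeral_2_eq_2\<close>)
qed

theorem theorem3p12:
  fixes n :: nat and x :: "nat list"
  assumes "n \<ge> 3" and "is_perm n x" and "avoids x [1,2,3]"
  shows "(\<exists>i. 1 \<le> i \<and> i \<le> n - 2 \<and>
            card (Act i x [1,2,3]) = card (Act (i+1) x [1,2,3]) \<and>
            card (Act (i+1) x [1,2,3]) \<le> card (Act (i+2) x [1,2,3]))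
         \<longleftrightarrow> contains_132star x"
proof
  assume "\<exists>i. 1 \<le> i \<and> i \<le> n - 2 \<and>
            card (Act i x [1,2,3]) = card (Act (i+1) x [1,2,3]) \<and>
            card (Act (i+1) x [1,2,3]) \<le> card (Act (i+2) x [1,2,3])"
  then obtain i where i: "1 \<le> i" "i \<le> n - 2"
    "card (Act i x [1,2,3]) = card (Act (i+1) x [1,2,3])"
    "card (Act (i+1) x [1,2,3]) \<le> card (Act (i+2) x [1,2,3])" by blast
  define k where "k = n + 1 - i"
  have k: "3 \<le> k" "k \<le> n" using i assms(1) unfolding k_def by auto
  have e: "n + 1 - (i+1) = k - 1" "n + 1 - (i+2) = k - 2" unfolding k_def using i assms(1) by auto
  have "dp (small k x) = dp (small (k-1) x)" "dp (small (k-1) x) \<le> dp (small (k-2) x)"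
    using i card_Act[OF assms(2,3), of i] card_Act[OF assms(2,3), of "i+1"] card_Act[OF assms(2,3), of "i+2"]
    unfolding e k_def[symmetric] by auto
  then show "contains_132star x" using dir1[OF assms(2,3) k] by blast
next
  assume "contains_132star x"
  then obtain k where k: "3 \<le> k" "k \<le> n" "dp (small k x) = dp (small (k-1) x)"
     "dp (small (k-1) x) \<le> dp (small (k-2) x)" using dir2[OF assms(2,3)] by blast
  define i where "i = n + 1 - k"
  have i: "1 \<le> i" "i \<le> n - 2" using k unfolding i_def by auto
  have e: "n + 1 - i = k" "n + 1 - (i+1) = k - 1" "n + 1 - (i+2) = k - 2" unfolding i_def using k by auto
  show "\<exists>i. 1 \<le> i \<and> i \<le> n - 2 \<and>
            card (Act i x [1,2,3]) = card (Act (i+1) x [1,2,3]) \<and>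
            card (Act (i+1) x [1,2,3]) \<le> card (Act (i+2) x [1,2,3])"
    apply (rule exI[of _ i])
    using i k card_Act[OF assms(2,3), of i] card_Act[OF assms(2,3), of "i+1"] card_Act[OF assms(2,3), of "i+2"]
    unfolding e by auto
qed

end
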